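(* Let $b$ be a prime, $(\gamma_j)_{j\ge1}$ a non-increasing sequence with $0<\gamma_j\le1$, and $0\le w_1\le w_2\le\cdots$ integers such that $\sum_{j=1}^\infty\gamma_jb^{w_j}<\infty$. Then for every $\delta\in(0,1)$ there is a constant $c_{\boldsymbol\gamma,\delta}>0$, independent of $s$ and $N$, such that for every $s\ge1$, every $m\ge1$ and $N=b^m$, the vector $\mathbf{z}=(b^{w_1}z_1,\dots,b^{w_s}z_s)$ constructed by the reduced CBC algorithm ($z_1=1$, and for $d=1,\dots,s-1$, $z_{d+1}\in\mathcal{Z}_{N,w_{d+1}}$ minimizes $z\mapsto R^{d+1}_{N,\boldsymbol\gamma}(b^{w_1}z_1,\dots,b^{w_d}z_d,b^{w_{d+1}}z)$) satisfies $$R^s_{N,\boldsymbol\gamma}(\mathbf{z})\le c_{\boldsymbol\gamma,\delta}N^{\delta-1}.$$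
   Context: $\beta_j=1+\gamma_j$. $\mathcal{Z}_{N,w}=\{z\in\{1,\dots,b^{m-w}-1\}:\gcd(z,b^m)=1\}$ if $w<m$, and $\{1\}$ if $w\ge m$. For $\mathbf{y}\in\mathbb{Z}^d$, $R^d_{N,\boldsymbol\gamma}(\mathbf{y})=\frac1N\sum_{k=0}^{N-1}\prod_{j=1}^d\big(\beta_j+\gamma_j\sum_{-N/2<h\le N/2,h\ne0}\frac{e^{2\pi i hky_j/N}}{|h|}\big)-\prod_{j=1}^d\beta_j$. *)

theory Defs
  imports "HOL-Analysis.Analysis"
begin

text \<open>beta_j = 1 + gamma_j; sequences are indexed from 1.\<close>
definition beta :: "(nat \<Rightarrow> real) \<Rightarrow> nat \<Rightarrow> real" where
  "beta \<gamma> j = 1 + \<gamma> j"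

definition Zset :: "nat \<Rightarrow> nat \<Rightarrow> nat \<Rightarrow> nat set" where
  "Zset b m w = (if w < m then {z. 1 \<le> z \<and> z \<le> b ^ (m - w) - 1 \<and> gcd z (b ^ m) = 1} else {1})"

definition Rc :: "nat \<Rightarrow> (nat \<Rightarrow> real) \<Rightarrow> nat \<Rightarrow> (nat \<Rightarrow> int) \<Rightarrow> complex" where
  "Rc N \<gamma> d y =
     (1 / of_nat N) * (\<Sum>k<N. \<Prod>j\<in>{1..d}.
        (of_real (beta \<gamma> j) + of_real (\<gamma> j) *
          (\<Sum>h\<in>{h::int. - (real N / 2) < real_of_int h \<and> real_of_int h \<le> real N / 2 \<and> h \<noteq> 0}.
              exp (2 * of_real pi * \<i> * of_int h * of_nat k * of_int (y j) / of_nat N)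
              / of_real \<bar>real_of_int h\<bar>)))
     - (\<Prod>j\<in>{1..d}. of_real (beta \<gamma> j))"

text \<open>R is real-valued (the imaginary parts cancel); we use its real part.\<close>
definition R :: "nat \<Rightarrow> (nat \<Rightarrow> real) \<Rightarrow> nat \<Rightarrow> (nat \<Rightarrow> int) \<Rightarrow> real" where
  "R N \<gamma> d y = Re (Rc N \<gamma> d y)"

definition genvec :: "nat \<Rightarrow> (nat \<Rightarrow> nat) \<Rightarrow> (nat \<Rightarrow> nat) \<Rightarrow> nat \<Rightarrow> int" where
  "genvec b w z j = int (b ^ w j * z j)"

text \<open>z_1,...,z_s is a possible output of the reduced CBC algorithm (any minimizer allowed).\<close>
definition reduced_CBC :: "nat \<Rightarrow> nat \<Rightarrow> (nat \<Rightarrow> real) \<Rightarrow> (nat \<Rightarrow> nat) \<Rightarrow> nat \<Rightarrow> (nat \<Rightarrow> nat) \<Rightarrow> bool" where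
  "reduced_CBC b m \<gamma> w s z \<longleftrightarrow>
     z 1 = 1 \<and>
     (\<forall>d. 1 \<le> d \<and> d < s \<longrightarrow>
        z (d + 1) \<in> Zset b m (w (d + 1)) \<and>
        (\<forall>z' \<in> Zset b m (w (d + 1)).
           R (b ^ m) \<gamma> (d + 1) (genvec b w z) \<le> R (b ^ m) \<gamma> (d + 1) (genvec b w (z(d + 1 := z')))))"

end

theory Submission
  imports Defs
begin


lemma harm_le_ln: assumes "n \<ge> 1" shows "harm n \<le> 1 + ln (real n)"
proof -
  have "harm (Suc (n-1)) - ln (real (Suc (n-1))) \<le> harm (Suc 0) - ln (real (Suc 0))"
    using decseq_harm_diff_ln[unfolded decseq_def] by blast
  then show ?thesis using assms by (simp add: harm_def)
qed

definition Hs :: "nat \<Rightarrow> int set" where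
  "Hs N = {h::int. - (real N / 2) < real_of_int h \<and> real_of_int h \<le> real N / 2 \<and> h \<noteq> 0}"

lemma Hs_sub: "Hs N \<subseteq> {-int N..int N}"
  unfolding Hs_def by auto

lemma finite_Hs[simp]: "finite (Hs N)"
  using Hs_sub finite_subset by blast

lemma sum_harm_int: "(\<Sum>u\<in>int ` {1..N}. 1 / \<bar>real_of_int u\<bar>) = harm N"
  by (subst sum.reindex) (auto simp: inj_on_def harm_def divide_inverse)

lemma sum_harm_negint: "(\<Sum>u\<in>(\<lambda>n. - int n) ` {1..N}. 1 / \<bar>real_of_int u\<bar>) = harm N"
  by (subst sum.reindex) (auto simp: inj_on_def harm_def divide_inverse)

lemma sum_Hs_dvd:
  fixes D :: int
  assumes "D > 0" "N \<ge> 1"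
  shows "(\<Sum>h\<in>{h\<in>Hs N. D dvd h}. 1 / \<bar>real_of_int h\<bar>) \<le> 2 * (1 + ln (real N)) / real_of_int D"
proof -
  define U where "U = int ` {1..N} \<union> (\<lambda>n. - int n) ` {1..N}"
  have finU: "finite U" unfolding U_def by auto
  have sub: "{h\<in>Hs N. D dvd h} \<subseteq> (\<lambda>u. D*u) ` U"
  proof
    fix h assume h: "h \<in> {h\<in>Hs N. D dvd h}"
    then obtain u where u: "h = D*u" by (auto elim: dvdE)
    have hb: "h \<noteq> 0" "\<bar>h\<bar> \<le> int N" using h Hs_sub[of N] unfolding Hs_def by auto
    have "u \<noteq> 0" using hb u by auto
    have "\<bar>u\<bar> \<le> \<bar>h\<bar>" using u assms(1) \<open>u\<noteq>0\<close>
      by (simp add: abs_mult)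
    hence "\<bar>u\<bar> \<le> int N" using hb by linarith
    have "u \<in> U"
    proof (cases "u > 0")
      case True
      then show ?thesis using \<open>\<bar>u\<bar> \<le> int N\<close> unfolding U_def
        by (auto intro!: image_eqI[of u int "nat u"])
    next
      case False
      then show ?thesis using \<open>\<bar>u\<bar> \<le> int N\<close> \<open>u\<noteq>0\<close> unfolding U_def
        by (auto intro!: image_eqI[of u "\<lambda>n. - int n" "nat (-u)"])
    qed
    then show "h \<in> (\<lambda>u. D*u) ` U" using u by auto
  qed
  have "(\<Sum>h\<in>{h\<in>Hs N. D dvd h}. 1 / \<bar>real_of_int h\<bar>) \<le> (\<Sum>h\<in>(\<lambda>u. D*u) ` U. 1 / \<bar>real_of_int h\<bar>)"
    by (rule sum_mono2) (use sub finU in auto)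
  also have "\<dots> = (\<Sum>u\<in>U. 1 / \<bar>real_of_int (D*u)\<bar>)"
    by (subst sum.reindex) (use assms in \<open>auto simp: inj_on_def\<close>)
  also have "\<dots> = (\<Sum>u\<in>U. 1 / \<bar>real_of_int u\<bar>) / real_of_int D"
    using assms by (simp add: sum_divide_distrib abs_mult mult.commute)
  also have "(\<Sum>u\<in>U. 1 / \<bar>real_of_int u\<bar>) = 2 * harm N"
    unfolding U_def
    using sum_harm_int[of N] sum_harm_negint[of N]
    by (subst sum.union_disjoint) auto
  also have "2 * harm N / real_of_int D \<le> 2 * (1 + ln (real N)) / real_of_int D"
    using harm_le_ln[OF assms(2)] assms by (simp add: divide_right_mono)
  finally show ?thesis .
qed

lemma sum_Hs: assumes "N \<ge> 1"
  shows "(\<Sum>h\<in>Hs N. 1 / \<bar>real_of_int h\<bar>) \<le> 2 * (1 + ln (real N))"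
  using sum_Hs_dvd[of 1 N] assms by simp

lemma val_split:
  fixes p h k :: int
  assumes "prime p" "p ^ j dvd h * k"
  shows "\<exists>t\<le>j. p ^ t dvd h \<and> p ^ (j - t) dvd k"
  using assms(2)
proof (induction j arbitrary: h)
  case 0
  then show ?case by auto
next
  case (Suc j)
  show ?case
  proof (cases "p dvd h")
    case True
    then obtain h' where h': "h = p * h'" by (auto elim: dvdE)
    have "p ^ j dvd h' * k"
      using Suc.prems h' assms(1) by (simp add: mult.assoc prime_gt_0_int)
    then obtain t where "t \<le> j" "p ^ t dvd h'" "p ^ (j - t) dvd k" using Suc.IH by blast
    then show ?thesis using h' by (intro exI[of _ "Suc t"]) auto
  next
    case False
    hence "p ^ Suc j dvd k" using prime_power_dvd_multD[of p "Suc j" h k] Suc.prems assms(1) by auto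
    then show ?thesis by (intro exI[of _ 0]) auto
  qed
qed

lemma card_mult_below:
  fixes D N :: nat
  assumes "D > 0" "D dvd N"
  shows "card {k. k < N \<and> D dvd k} = N div D"
proof -
  have "{k. k < N \<and> D dvd k} = (\<lambda>u. D*u) ` {..<N div D}"
  proof (rule set_eqI, rule iffI)
    fix k assume "k \<in> {k. k < N \<and> D dvd k}"
    then obtain u where "k = D*u" "D*u < N" by (auto elim: dvdE)
    moreover have "u < N div D" using assms calculation
      by (metis dvd_mult_div_cancel mult_less_cancel1)
    ultimately show "k \<in> (\<lambda>u. D*u) ` {..<N div D}" by auto
  next
    fix k assume "k \<in> (\<lambda>u. D*u) ` {..<N div D}"
    then obtain u where "k = D*u" "u < N div D" by auto
    moreover have "D*u < N" using assms calculation
      by (metis dvd_mult_div_cancel mult_less_cancel1)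
    ultimately show "k \<in> {k. k < N \<and> D dvd k}" by auto
  qed
  also have "card \<dots> = N div D" using assms by (subst card_image) (auto simp: inj_on_def)
  finally show ?thesis .
qed

lemma count_sum:
  fixes b m r N :: nat
  assumes "prime b" "1 \<le> r" "r \<le> m" "N = b ^ m"
  shows "(\<Sum>k<N. \<Sum>h\<in>{h\<in>Hs N. int (b^(r-1)) dvd h * int k}. 1 / \<bar>real_of_int h\<bar>)
     \<le> real r * (2 * (1 + ln (real N))) * real N / real (b^(r-1))"
proof -
  define f where "f h = 1 / \<bar>real_of_int h\<bar>" for h :: int
  define K where "K = 2 * (1 + ln (real N))"
  have b0: "b > 0" using assms(1) prime_gt_0_nat by blast
  have N1: "N \<ge> 1" using assms b0 by simp
  have pb: "prime (int b)" using assms(1) by simp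
  have f0: "f h \<ge> 0" for h unfolding f_def by simp
  have "(\<Sum>k<N. \<Sum>h\<in>{h\<in>Hs N. int (b^(r-1)) dvd h * int k}. f h)
      = (\<Sum>k<N. \<Sum>h\<in>Hs N. if int (b^(r-1)) dvd h * int k then f h else 0)"
    by (simp add: sum.inter_filter)
  also have "\<dots> \<le> (\<Sum>k<N. \<Sum>h\<in>Hs N. \<Sum>t<r. if int b ^ t dvd h \<and> int b ^ (r-1-t) dvd int k then f h else 0)"
  proof (intro sum_mono)
    fix k h
    show "(if int (b^(r-1)) dvd h * int k then f h else 0)
        \<le> (\<Sum>t<r. if int b ^ t dvd h \<and> int b ^ (r-1-t) dvd int k then f h else 0)"
    proof (cases "int (b^(r-1)) dvd h * int k")
      case True
      then obtain t where t: "t \<le> r-1" "int b ^ t dvd h" "int b ^ (r-1-t) dvd int k"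
        using val_split[OF pb, of "r-1" h "int k"] by auto
      have "f h = (if int b ^ t dvd h \<and> int b ^ (r-1-t) dvd int k then f h else 0)" using t by simp
      also have "\<dots> \<le> (\<Sum>t<r. if int b ^ t dvd h \<and> int b ^ (r-1-t) dvd int k then f h else 0)"
        by (rule member_le_sum) (use t assms(2) f0 in auto)
      finally show ?thesis using True by simp
    next
      case False
      then show ?thesis using f0 by (auto intro!: sum_nonneg)
    qed
  qed
  also have "\<dots> = (\<Sum>t<r. \<Sum>k<N. \<Sum>h\<in>Hs N. if int b ^ t dvd h \<and> int b ^ (r-1-t) dvd int k then f h else 0)"
    by (subst sum.swap) (simp add: sum.swap[of _ "Hs N"])
  also have "\<dots> = (\<Sum>t<r. \<Sum>k<N. if b ^ (r-1-t) dvd k then (\<Sum>h\<in>{h\<in>Hs N. int b ^ t dvd h}. f h) else 0)"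
  proof (intro sum.cong refl)
    fix t k
    have "int b ^ (r-1-t) dvd int k \<longleftrightarrow> b ^ (r-1-t) dvd k"
      by (metis of_nat_dvd_iff of_nat_power)
    then show "(\<Sum>h\<in>Hs N. if int b ^ t dvd h \<and> int b ^ (r-1-t) dvd int k then f h else 0)
       = (if b ^ (r-1-t) dvd k then (\<Sum>h\<in>{h\<in>Hs N. int b ^ t dvd h}. f h) else 0)"
      by (simp add: sum.inter_filter)
  qed
  also have "\<dots> = (\<Sum>t<r. real (card {k. k < N \<and> b ^ (r-1-t) dvd k}) * (\<Sum>h\<in>{h\<in>Hs N. int b ^ t dvd h}. f h))"
  proof (intro sum.cong refl)
    fix t
    have "(\<Sum>k<N. if b ^ (r-1-t) dvd k then (\<Sum>h\<in>{h\<in>Hs N. int b ^ t dvd h}. f h) else 0)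
       = (\<Sum>k\<in>{k. k < N \<and> b ^ (r-1-t) dvd k}. (\<Sum>h\<in>{h\<in>Hs N. int b ^ t dvd h}. f h))"
      by (subst sum.inter_filter[symmetric]) (auto intro!: sum.cong simp: lessThan_def)
    then show "(\<Sum>k<N. if b ^ (r-1-t) dvd k then (\<Sum>h\<in>{h\<in>Hs N. int b ^ t dvd h}. f h) else 0)
       = real (card {k. k < N \<and> b ^ (r-1-t) dvd k}) * (\<Sum>h\<in>{h\<in>Hs N. int b ^ t dvd h}. f h)"
      by simp
  qed
  also have "\<dots> \<le> (\<Sum>t<r. K * real N / real (b^(r-1)))"
  proof (intro sum_mono)
    fix t assume t: "t \<in> {..<r}"
    have dv: "b ^ (r-1-t) dvd N" using assms(3,4) t by (simp add: le_imp_power_dvd)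
    have c: "real (card {k. k < N \<and> b ^ (r-1-t) dvd k}) = real N / real (b ^ (r-1-t))"
      using card_mult_below[of "b ^ (r-1-t)" N] dv b0 by (simp add: real_of_nat_div)
    have s: "(\<Sum>h\<in>{h\<in>Hs N. int b ^ t dvd h}. f h) \<le> K / real (b ^ t)"
      using sum_Hs_dvd[of "int b ^ t" N] b0 N1 unfolding f_def K_def by simp
    have "real (card {k. k < N \<and> b ^ (r-1-t) dvd k}) * (\<Sum>h\<in>{h\<in>Hs N. int b ^ t dvd h}. f h)
        \<le> real N / real (b ^ (r-1-t)) * (K / real (b ^ t))"
      unfolding c by (rule mult_left_mono[OF s]) simp
    also have "\<dots> = K * real N / (real (b ^ (r-1-t)) * real (b ^ t))" by simp
    also have "real (b ^ (r-1-t)) * real (b ^ t) = real (b ^ (r-1))"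
      using t by (simp flip: of_nat_mult power_add)
    finally show "real (card {k. k < N \<and> b ^ (r-1-t) dvd k}) * (\<Sum>h\<in>{h\<in>Hs N. int b ^ t dvd h}. f h)
        \<le> K * real N / real (b^(r-1))" .
  qed
  also have "\<dots> = real r * K * real N / real (b^(r-1))" by simp
  finally show ?thesis unfolding f_def K_def .
qed



lemma cexp_int_1: "exp (2 * of_real pi * \<i> * of_int a) = (1::complex)"
  by (subst exp_eq_1) (auto intro!: exI[of _ a])

lemma geo_sum:
  fixes a :: int
  assumes "n > 0" "\<not> int n dvd a"
  shows "(\<Sum>z<n. exp (2 * of_real pi * \<i> * of_int a * of_nat z / of_nat n)) = (0::complex)"
proof -
  define q where "q = (exp (2 * of_real pi * \<i> * of_int a / of_nat n) :: complex)"
  have qz: "exp (2 * of_real pi * \<i> * of_int a * of_nat z / of_nat n) = q ^ z" for z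
  proof -
    have "exp (2 * of_real pi * \<i> * of_int a * of_nat z / of_nat n) = exp (of_nat z * (2 * of_real pi * \<i> * of_int a / of_nat n))"
      by (simp add: field_simps)
    also have "\<dots> = q ^ z" unfolding q_def by (rule exp_of_nat_mult)
    finally show ?thesis .
  qed
  have qn: "q ^ n = 1"
  proof -
    have "q ^ n = exp (of_nat n * (2 * of_real pi * \<i> * of_int a / of_nat n))"
      unfolding q_def by (rule exp_of_nat_mult[symmetric])
    also have "\<dots> = exp (2 * of_real pi * \<i> * of_int a)" using assms(1) by simp
    finally show ?thesis using cexp_int_1 by simp
  qed
  have q1: "q \<noteq> 1"
  proof
    assume "q = 1"
    then obtain t :: int where t: "Im (2 * of_real pi * \<i> * of_int a / of_nat n) = of_int (2 * t) * pi"
      unfolding q_def exp_eq_1 by blast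
    hence "2 * pi * a / n = 2 * t * pi" by simp
    hence "real_of_int a = real n * t" using assms(1) pi_gt_zero by (simp add: field_simps)
    hence "a = int n * t" by (metis of_int_eq_iff of_int_mult of_int_of_nat_eq)
    thus False using assms(2) by simp
  qed
  show ?thesis unfolding qz using sum_gp_strict[of q n] qn q1 by simp
qed

lemma norm_cexp_real: "norm (exp (2 * of_real pi * \<i> * of_int a * of_nat z / of_nat n)) = 1"
  by simp

lemma cexp_dvd:
  fixes a :: int
  assumes "n > 0" "int n dvd a"
  shows "exp (2 * of_real pi * \<i> * of_int a * of_nat z / of_nat n) = (1::complex)"
proof -
  obtain t where "a = int n * t" using assms by (auto elim: dvdE)
  hence e: "2 * of_real pi * \<i> * of_int a * of_nat z / of_nat n = 2 * of_real pi * \<i> * (of_int (t * int z) :: complex)"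
    using assms(1) by (simp add: field_simps)
  show ?thesis unfolding e by (rule cexp_int_1)
qed


lemma Zset_eq:
  assumes "prime b" "w < m"
  shows "Zset b m w = {z. z < b^(m-w) \<and> \<not> b dvd z}"
proof -
  have b2: "b \<ge> 2" using assms(1) prime_ge_2_nat by blast
  have g: "gcd z (b^m) = 1 \<longleftrightarrow> \<not> b dvd z" for z
  proof -
    have "gcd z (b^m) = 1 \<longleftrightarrow> coprime z (b^m)" by (simp add: coprime_iff_gcd_eq_1)
    also have "\<dots> \<longleftrightarrow> coprime z b" using assms(2) by simp
    also have "\<dots> \<longleftrightarrow> \<not> b dvd z"
      using assms(1) by (metis coprime_absorb_right coprime_commute not_prime_unit prime_imp_coprime_nat)
    finally show ?thesis .
  qed
  have "b^(m-w) \<ge> 1" using b2 by simp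
  have nz: "\<not> b dvd z \<Longrightarrow> z \<noteq> 0" for z by (metis dvd_0_right)
  show ?thesis
  proof (rule set_eqI)
    fix z
    show "z \<in> Zset b m w \<longleftrightarrow> z \<in> {z. z < b^(m-w) \<and> \<not> b dvd z}"
      unfolding Zset_def using assms(2) g[of z] nz[of z] \<open>b^(m-w) \<ge> 1\<close> by auto
  qed
qed

lemma ram_sum:
  fixes a :: int
  assumes "prime b" "r \<ge> 1" "\<not> int (b^(r-1)) dvd a"
  shows "(\<Sum>z\<in>{z. z < b^r \<and> \<not> b dvd z}. exp (2 * of_real pi * \<i> * of_int a * of_nat z / of_nat (b^r))) = (0::complex)"
proof -
  define g where "g z = (exp (2 * of_real pi * \<i> * of_int a * of_nat z / of_nat (b^r)) :: complex)" for z :: nat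
  have b0: "b > 0" using assms(1) prime_gt_0_nat by blast
  have r: "b^r = b * b^(r-1)" using assms(2) by (metis Suc_diff_1 less_le_trans zero_less_one power_Suc)
  have all: "(\<Sum>z<b^r. g z) = 0"
    unfolding g_def
  proof (rule geo_sum)
    show "0 < b^r" using b0 by simp
    show "\<not> int (b^r) dvd a" using assms(3) r by (metis dvd_mult_right of_nat_mult)
  qed
  have mult: "(\<Sum>z\<in>{z. z < b^r \<and> b dvd z}. g z) = 0"
  proof -
    have "{z. z < b^r \<and> b dvd z} = (\<lambda>t. b*t) ` {..<b^(r-1)}"
    proof (rule set_eqI, rule iffI)
      fix z assume "z \<in> {z. z < b^r \<and> b dvd z}"
      then obtain t where "z = b*t" "b*t < b * b^(r-1)" using r by (auto elim: dvdE)
      thus "z \<in> (\<lambda>t. b*t) ` {..<b^(r-1)}" by auto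
    next
      fix z assume "z \<in> (\<lambda>t. b*t) ` {..<b^(r-1)}"
      then obtain t where "z = b*t" "t < b^(r-1)" by auto
      thus "z \<in> {z. z < b^r \<and> b dvd z}" using r b0 by auto
    qed
    hence "(\<Sum>z\<in>{z. z < b^r \<and> b dvd z}. g z) = (\<Sum>t<b^(r-1). g (b*t))"
      using b0 by (simp add: sum.reindex inj_on_def)
    also have "\<dots> = (\<Sum>t<b^(r-1). exp (2 * of_real pi * \<i> * of_int a * of_nat t / of_nat (b^(r-1))))"
      unfolding g_def using b0 r by (intro sum.cong refl) (simp add: field_simps)
    also have "\<dots> = 0" using geo_sum[of "b^(r-1)" a] assms(3) b0 by simp
    finally show ?thesis .
  qed
  have "(\<Sum>z<b^r. g z) = (\<Sum>z\<in>{z. z < b^r \<and> \<not> b dvd z}. g z) + (\<Sum>z\<in>{z. z < b^r \<and> b dvd z}. g z)"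
    by (subst sum.union_disjoint[symmetric]) (auto intro!: sum.cong)
  thus ?thesis using all mult unfolding g_def by simp
qed



definition ee :: "nat \<Rightarrow> int \<Rightarrow> nat \<Rightarrow> int \<Rightarrow> complex" where
  "ee N h k y = exp (2 * of_real pi * \<i> * of_int h * of_nat k * of_int y / of_nat N)"

definition Sf :: "nat \<Rightarrow> nat \<Rightarrow> int \<Rightarrow> complex" where
  "Sf N k y = (\<Sum>h\<in>Hs N. ee N h k y / of_real \<bar>real_of_int h\<bar>)"

definition Pf :: "nat \<Rightarrow> (nat \<Rightarrow> real) \<Rightarrow> nat \<Rightarrow> nat \<Rightarrow> (nat \<Rightarrow> int) \<Rightarrow> complex" where
  "Pf N \<gamma> d k y = (\<Prod>j\<in>{1..d}. of_real (beta \<gamma> j) + of_real (\<gamma> j) * Sf N k (y j))"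

lemma Rc_alt: "Rc N \<gamma> d y = 1 / of_nat N * (\<Sum>k<N. Pf N \<gamma> d k y) - (\<Prod>j\<in>{1..d}. of_real (beta \<gamma> j))"
  unfolding Rc_def Pf_def Sf_def ee_def Hs_def by simp

lemma Pf_Suc: "Pf N \<gamma> (Suc d) k y = Pf N \<gamma> d k y * (of_real (beta \<gamma> (Suc d)) + of_real (\<gamma> (Suc d)) * Sf N k (y (Suc d)))"
  unfolding Pf_def by (simp add: prod.nat_ivl_Suc')

lemma Rc_Suc:
  assumes "N > 0"
  shows "Rc N \<gamma> (Suc d) y = of_real (beta \<gamma> (Suc d)) * Rc N \<gamma> d y
     + of_real (\<gamma> (Suc d)) / of_nat N * (\<Sum>k<N. Pf N \<gamma> d k y * Sf N k (y (Suc d)))"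
proof -
  have "(\<Prod>j\<in>{1..Suc d}. (of_real (beta \<gamma> j)::complex)) = (\<Prod>j\<in>{1..d}. of_real (beta \<gamma> j)) * of_real (beta \<gamma> (Suc d))"
    by (simp add: prod.nat_ivl_Suc')
  then show ?thesis
    unfolding Rc_alt Pf_Suc using assms
    by (simp add: sum.distrib sum_distrib_left sum_distrib_right algebra_simps sum_divide_distrib)
qed

lemma Rc_0: "N > 0 \<Longrightarrow> Rc N \<gamma> 0 y = 0"
  unfolding Rc_alt Pf_def by simp

lemma Pf_cong: "(\<And>j. 1 \<le> j \<Longrightarrow> j \<le> d \<Longrightarrow> y j = y' j) \<Longrightarrow> Pf N \<gamma> d k y = Pf N \<gamma> d k y'"
  unfolding Pf_def by (intro prod.cong) auto

lemma Rc_cong: "(\<And>j. 1 \<le> j \<Longrightarrow> j \<le> d \<Longrightarrow> y j = y' j) \<Longrightarrow> Rc N \<gamma> d y = Rc N \<gamma> d y'"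
  unfolding Rc_alt using Pf_cong[of d y y'] by simp

lemma norm_ee: "norm (ee N h k y) = 1"
  unfolding ee_def by simp

lemma norm_Sf: assumes "N \<ge> 1" shows "norm (Sf N k y) \<le> 2 * (1 + ln (real N))"
proof -
  have "norm (Sf N k y) \<le> (\<Sum>h\<in>Hs N. norm (ee N h k y / of_real \<bar>real_of_int h\<bar>))"
    unfolding Sf_def by (rule norm_sum)
  also have "\<dots> = (\<Sum>h\<in>Hs N. 1 / \<bar>real_of_int h\<bar>)"
    by (intro sum.cong refl) (simp add: norm_divide norm_ee)
  also have "\<dots> \<le> 2 * (1 + ln (real N))" using sum_Hs assms by simp
  finally show ?thesis .
qed

lemma norm_Pf:
  assumes "N \<ge> 1" "\<And>j. j \<ge> 1 \<Longrightarrow> 0 \<le> \<gamma> j"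
  shows "norm (Pf N \<gamma> d k y) \<le> (\<Prod>j\<in>{1..d}. 1 + \<gamma> j * (3 + 2 * ln (real N)))"
  unfolding Pf_def prod_norm[symmetric]
proof (rule prod_mono, safe)
  fix j assume j: "j \<in> {1..d}"
  have g: "0 \<le> \<gamma> j" using assms(2) j by auto
  have "norm (of_real (beta \<gamma> j) + of_real (\<gamma> j) * Sf N k (y j)) \<le> norm (of_real (beta \<gamma> j) :: complex) + norm (of_real (\<gamma> j) * Sf N k (y j))"
    by (rule norm_triangle_ineq)
  also have "\<dots> \<le> (1 + \<gamma> j) + \<gamma> j * (2 * (1 + ln (real N)))"
  proof -
    have "norm (of_real (beta \<gamma> j) :: complex) = 1 + \<gamma> j"
      unfolding norm_of_real beta_def using g by simp
    moreover have "norm (of_real (\<gamma> j) * Sf N k (y j)) \<le> \<gamma> j * (2 * (1 + ln (real N)))"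
      using g norm_Sf[OF assms(1), of k "y j"] by (simp add: norm_mult mult_left_mono)
    ultimately show ?thesis by linarith
  qed
  finally show "norm (of_real (beta \<gamma> j) + of_real (\<gamma> j) * Sf N k (y j)) \<le> 1 + \<gamma> j * (3 + 2 * ln (real N))"
    by (simp add: algebra_simps)
qed simp



lemma ee_rewrite:
  assumes "b > 0" "w' < m"
  shows "ee (b^m) h k (int (b^w' * z)) = exp (2 * of_real pi * \<i> * of_int (h * int k) * of_nat z / of_nat (b^(m-w')))"
proof -
  have bm: "b^m = b^w' * b^(m-w')" using assms(2) by (simp flip: power_add)
  show ?thesis unfolding ee_def bm using assms(1) by (simp add: field_simps)
qed

lemma finite_Zset: "finite (Zset b m w)"
  unfolding Zset_def by (auto intro: finite_subset[of _ "{..b^m}"])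

lemma one_in_Zset: assumes "prime b" shows "1 \<in> Zset b m w"
proof -
  have "b \<ge> 2" using assms prime_ge_2_nat by blast
  have "w < m \<Longrightarrow> b^(m-w) \<ge> 2"
  proof -
    assume "w < m"
    hence "b^1 \<le> b^(m-w)" using \<open>b \<ge> 2\<close> by (intro power_increasing) auto
    thus ?thesis using \<open>b \<ge> 2\<close> by simp
  qed
  thus ?thesis unfolding Zset_def by auto
qed

lemma avg_bound:
  assumes "prime b" "w' < m"
  shows "norm (\<Sum>z\<in>Zset b m w'. Sf (b^m) k (int (b^w' * z)))
     \<le> real (card (Zset b m w')) * (\<Sum>h\<in>{h\<in>Hs (b^m). int (b^(m-w'-1)) dvd h * int k}. 1 / \<bar>real_of_int h\<bar>)"
proof -
  define Z where "Z = Zset b m w'"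
  define N where "N = b^m"
  have b0: "b > 0" using assms(1) prime_gt_0_nat by blast
  have "(\<Sum>z\<in>Z. Sf N k (int (b^w' * z))) = (\<Sum>h\<in>Hs N. (\<Sum>z\<in>Z. ee N h k (int (b^w' * z))) / of_real \<bar>real_of_int h\<bar>)"
    unfolding Sf_def by (subst sum.swap) (simp add: sum_divide_distrib)
  also have "norm \<dots> \<le> (\<Sum>h\<in>Hs N. norm ((\<Sum>z\<in>Z. ee N h k (int (b^w' * z))) / of_real \<bar>real_of_int h\<bar>))"
    by (rule norm_sum)
  also have "\<dots> \<le> (\<Sum>h\<in>Hs N. if int (b^(m-w'-1)) dvd h * int k then real (card Z) * (1 / \<bar>real_of_int h\<bar>) else 0)"
  proof (rule sum_mono)
    fix h
    show "norm ((\<Sum>z\<in>Z. ee N h k (int (b^w' * z))) / of_real \<bar>real_of_int h\<bar>)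
      \<le> (if int (b^(m-w'-1)) dvd h * int k then real (card Z) * (1 / \<bar>real_of_int h\<bar>) else 0)"
    proof (cases "int (b^(m-w'-1)) dvd h * int k")
      case True
      have "norm (\<Sum>z\<in>Z. ee N h k (int (b^w' * z))) \<le> (\<Sum>z\<in>Z. norm (ee N h k (int (b^w' * z))))"
        by (rule norm_sum)
      also have "\<dots> = real (card Z)" by (simp add: norm_ee)
      finally show ?thesis using True by (simp add: norm_divide divide_right_mono)
    next
      case False
      have "(\<Sum>z\<in>Z. ee N h k (int (b^w' * z))) = (\<Sum>z\<in>{z. z < b^(m-w') \<and> \<not> b dvd z}. exp (2 * of_real pi * \<i> * of_int (h * int k) * of_nat z / of_nat (b^(m-w'))))"
        unfolding Z_def N_def Zset_eq[OF assms] using ee_rewrite[OF b0 assms(2)] by simp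
      also have "\<dots> = 0"
        by (rule ram_sum) (use assms False in \<open>auto simp: diff_diff_add\<close>)
      finally show ?thesis using False by simp
    qed
  qed
  also have "\<dots> = real (card Z) * (\<Sum>h\<in>{h\<in>Hs N. int (b^(m-w'-1)) dvd h * int k}. 1 / \<bar>real_of_int h\<bar>)"
    by (auto simp: sum.inter_filter sum_distrib_left intro!: sum.cong)
  finally show ?thesis unfolding Z_def N_def .
qed

lemma sum_avg:
  assumes "prime b" "m \<ge> 1"
  shows "(\<Sum>k<b^m. norm (1 / of_nat (card (Zset b m w')) * (\<Sum>z\<in>Zset b m w'. Sf (b^m) k (int (b^w' * z)))))
     \<le> real m * (2 * (1 + ln (real (b^m)))) * real b * real (b^w')"
proof -
  define N where "N = b^m"
  define K where "K = 2 * (1 + ln (real N))"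
  have b2: "b \<ge> 2" using assms(1) prime_ge_2_nat by blast
  have N1: "N \<ge> 1" unfolding N_def using b2 by simp
  have K0: "K \<ge> 0" unfolding K_def using N1 by simp
  have cZ: "card (Zset b m w') > 0" using finite_Zset one_in_Zset[OF assms(1)] card_gt_0_iff by blast
  show ?thesis
  proof (cases "w' < m")
    case True
    define r where "r = m - w'"
    have r: "r \<ge> 1" "r \<le> m" unfolding r_def using True by auto
    have "(\<Sum>k<N. norm (1 / of_nat (card (Zset b m w')) * (\<Sum>z\<in>Zset b m w'. Sf N k (int (b^w' * z)))))
       \<le> (\<Sum>k<N. \<Sum>h\<in>{h\<in>Hs N. int (b^(r-1)) dvd h * int k}. 1 / \<bar>real_of_int h\<bar>)"
    proof (rule sum_mono)
      fix k
      have "norm (1 / of_nat (card (Zset b m w')) * (\<Sum>z\<in>Zset b m w'. Sf N k (int (b^w' * z))))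
          = norm (\<Sum>z\<in>Zset b m w'. Sf N k (int (b^w' * z))) / real (card (Zset b m w'))"
        by (simp add: norm_mult norm_divide)
      also have "\<dots> \<le> (\<Sum>h\<in>{h\<in>Hs N. int (b^(r-1)) dvd h * int k}. 1 / \<bar>real_of_int h\<bar>)"
        using avg_bound[OF assms(1) True, of k] cZ unfolding N_def r_def
        by (simp add: pos_divide_le_eq mult.commute)
      finally show "norm (1 / of_nat (card (Zset b m w')) * (\<Sum>z\<in>Zset b m w'. Sf N k (int (b^w' * z))))
          \<le> (\<Sum>h\<in>{h\<in>Hs N. int (b^(r-1)) dvd h * int k}. 1 / \<bar>real_of_int h\<bar>)" .
    qed
    also have "\<dots> \<le> real r * K * (real N / real (b^(r-1)))"
      using count_sum[OF assms(1) r, of N] unfolding K_def N_def by simp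
    also have "real N / real (b^(r-1)) = real b * real (b^w')"
    proof -
      have "N = b^(r-1) * (b * b^w')" unfolding N_def r_def using True
        by (simp flip: power_add power_Suc)
      thus ?thesis using b2 by simp
    qed
    also have "real r * K * (real b * real (b^w')) \<le> real m * K * (real b * real (b^w'))"
      using r K0 by (intro mult_right_mono mult_left_mono) auto
    finally show ?thesis unfolding N_def K_def by (simp add: mult.assoc)

  next
    case False
    hence Z1: "Zset b m w' = {1}" unfolding Zset_def by simp
    have "(\<Sum>k<N. norm (1 / of_nat (card (Zset b m w')) * (\<Sum>z\<in>Zset b m w'. Sf N k (int (b^w' * z)))))
        = (\<Sum>k<N. norm (Sf N k (int (b^w'))))" unfolding Z1 by simp
    also have "\<dots> \<le> (\<Sum>k<N. K)" unfolding K_def by (rule sum_mono) (rule norm_Sf[OF N1])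
    also have "\<dots> = real N * K" by simp
    also have "\<dots> \<le> real m * K * real b * real (b^w')"
    proof -
      have "real N \<le> real (b^w')" unfolding N_def using False b2 by (simp add: power_increasing)
      also have "\<dots> \<le> real m * real b * real (b^w')"
      proof -
        have "1 * 1 \<le> real m * real b" using assms(2) b2 by (intro mult_mono) auto
        hence "1 * real (b^w') \<le> real m * real b * real (b^w')" by (intro mult_right_mono) auto
        thus ?thesis by simp
      qed
      finally have "real N \<le> real m * real b * real (b^w')" .
      hence "real N * K \<le> (real m * real b * real (b^w')) * K" using K0 by (rule mult_right_mono)
      thus ?thesis by (simp add: algebra_simps)
    qed
    finally show ?thesis unfolding N_def K_def .
  qed
qed



lemma genvec_upd_cong:
  assumes "1 \<le> j" "j \<le> d"
  shows "genvec b w (z(Suc d := z')) j = genvec b w z j"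
  using assms unfolding genvec_def by auto

lemma step_bound:
  assumes b: "prime b" and m: "m \<ge> 1" and g: "\<And>j. j \<ge> 1 \<Longrightarrow> 0 < \<gamma> j"
    and cbc: "reduced_CBC b m \<gamma> w s z" and d: "1 \<le> d" "d < s"
  shows "R (b^m) \<gamma> (Suc d) (genvec b w z) \<le> beta \<gamma> (Suc d) * R (b^m) \<gamma> d (genvec b w z)
     + \<gamma> (Suc d) * real b ^ w (Suc d) * (\<Prod>j\<in>{1..d}. 1 + \<gamma> j * (3 + 2 * ln (real (b^m))))
       * (real m * (2 * (1 + ln (real (b^m)))) * real b / real (b^m))"
proof -
  define N where "N = b^m"
  define y where "y = genvec b w z"
  define w' where "w' = w (Suc d)"
  define Z where "Z = Zset b m w'"
  define Q where "Q = (\<Prod>j\<in>{1..d}. 1 + \<gamma> j * (3 + 2 * ln (real N)))"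
  define av where "av k = 1 / of_nat (card Z) * (\<Sum>z'\<in>Z. Sf N k (int (b^w' * z')))" for k
  have b2: "b \<ge> 2" using b prime_ge_2_nat by blast
  have N0: "N > 0" "N \<ge> 1" unfolding N_def using b2 by auto
  have finZ: "finite Z" unfolding Z_def by (rule finite_Zset)
  have cZ: "card Z > 0" unfolding Z_def using finite_Zset one_in_Zset[OF b] card_gt_0_iff by blast
  have lnN: "ln (real N) \<ge> 0" using N0 by simp
  have Q0: "Q \<ge> 0" unfolding Q_def
  proof (rule prod_nonneg)
    fix j assume "j \<in> {1..d}"
    hence "0 \<le> \<gamma> j" using g by (simp add: less_imp_le)
    thus "0 \<le> 1 + \<gamma> j * (3 + 2 * ln (real N))" using lnN by simp
  qed
  have Rc_upd: "Rc N \<gamma> (Suc d) (genvec b w (z(Suc d := z'))) = of_real (beta \<gamma> (Suc d)) * Rc N \<gamma> d y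
     + of_real (\<gamma> (Suc d)) / of_nat N * (\<Sum>k<N. Pf N \<gamma> d k y * Sf N k (int (b^w' * z')))" for z'
  proof -
    have "Rc N \<gamma> d (genvec b w (z(Suc d := z'))) = Rc N \<gamma> d y"
      unfolding y_def by (rule Rc_cong) (rule genvec_upd_cong)
    moreover have "Pf N \<gamma> d k (genvec b w (z(Suc d := z'))) = Pf N \<gamma> d k y" for k
      unfolding y_def by (rule Pf_cong) (rule genvec_upd_cong)
    moreover have "genvec b w (z(Suc d := z')) (Suc d) = int (b^w' * z')"
      unfolding genvec_def w'_def by simp
    ultimately show ?thesis using Rc_Suc[OF N0(1)] by simp
  qed
  have zz: "z(Suc d := z (Suc d)) = z" by simp
  have min: "R N \<gamma> (Suc d) y \<le> R N \<gamma> (Suc d) (genvec b w (z(Suc d := z')))" if "z' \<in> Z" for z'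
    using cbc d that unfolding reduced_CBC_def Z_def N_def y_def w'_def by auto
  have "real (card Z) * R N \<gamma> (Suc d) y = (\<Sum>z'\<in>Z. R N \<gamma> (Suc d) y)" by simp
  also have "\<dots> \<le> (\<Sum>z'\<in>Z. R N \<gamma> (Suc d) (genvec b w (z(Suc d := z'))))"
    by (rule sum_mono) (rule min)
  also have "\<dots> = Re (\<Sum>z'\<in>Z. Rc N \<gamma> (Suc d) (genvec b w (z(Suc d := z'))))"
    unfolding R_def by simp
  also have "(\<Sum>z'\<in>Z. Rc N \<gamma> (Suc d) (genvec b w (z(Suc d := z'))))
     = of_nat (card Z) * (of_real (beta \<gamma> (Suc d)) * Rc N \<gamma> d y
        + of_real (\<gamma> (Suc d)) / of_nat N * (\<Sum>k<N. Pf N \<gamma> d k y * av k))"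
    unfolding Rc_upd av_def using cZ
    by (simp add: sum.distrib sum_distrib_left sum_distrib_right sum_divide_distrib algebra_simps
        flip: sum_divide_distrib) (simp add: sum.swap[of _ Z] sum_distrib_left sum_divide_distrib)
  finally have "real (card Z) * R N \<gamma> (Suc d) y \<le> real (card Z) * (beta \<gamma> (Suc d) * R N \<gamma> d y
     + Re (of_real (\<gamma> (Suc d)) / of_nat N * (\<Sum>k<N. Pf N \<gamma> d k y * av k)))"
    unfolding R_def by simp
  hence main: "R N \<gamma> (Suc d) y \<le> beta \<gamma> (Suc d) * R N \<gamma> d y
     + Re (of_real (\<gamma> (Suc d)) / of_nat N * (\<Sum>k<N. Pf N \<gamma> d k y * av k))"
    using cZ by simp
  have ns: "norm (\<Sum>k<N. Pf N \<gamma> d k y * av k) \<le> Q * (real m * (2 * (1 + ln (real N))) * real b * real (b^w'))"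
  proof -
    have "norm (\<Sum>k<N. Pf N \<gamma> d k y * av k) \<le> (\<Sum>k<N. norm (Pf N \<gamma> d k y * av k))" by (rule norm_sum)
    also have "\<dots> \<le> (\<Sum>k<N. Q * norm (av k))"
      unfolding norm_mult Q_def
      by (intro sum_mono mult_right_mono norm_Pf) (use N0 g in \<open>auto intro: less_imp_le\<close>)
    also have "(\<Sum>k<N. Q * norm (av k)) \<le> Q * (real m * (2 * (1 + ln (real N))) * real b * real (b^w'))"
      unfolding sum_distrib_left[symmetric] av_def Z_def N_def
      by (rule mult_left_mono[OF sum_avg[OF b m] Q0[unfolded N_def]])
    finally show ?thesis .
  qed
  have "Re (of_real (\<gamma> (Suc d)) / of_nat N * (\<Sum>k<N. Pf N \<gamma> d k y * av k))
      \<le> norm (of_real (\<gamma> (Suc d)) / of_nat N * (\<Sum>k<N. Pf N \<gamma> d k y * av k))"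
    by (rule complex_Re_le_cmod)
  also have "\<dots> = \<gamma> (Suc d) / real N * norm (\<Sum>k<N. Pf N \<gamma> d k y * av k)"
    using g[of "Suc d"] by (simp add: norm_mult norm_divide)
  also have "\<dots> \<le> \<gamma> (Suc d) / real N * (Q * (real m * (2 * (1 + ln (real N))) * real b * real (b^w')))"
    using g[of "Suc d"] N0 ns by (intro mult_left_mono) auto
  finally have "Re (of_real (\<gamma> (Suc d)) / of_nat N * (\<Sum>k<N. Pf N \<gamma> d k y * av k))
     \<le> \<gamma> (Suc d) / real N * (Q * (real m * (2 * (1 + ln (real N))) * real b * real (b^w')))" .
  with main show ?thesis unfolding N_def y_def Q_def w'_def
    by (simp add: field_simps)
qed



lemma sum_Sf_bound:
  assumes b: "prime b" and m: "m \<ge> 1"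
  shows "norm (\<Sum>k<b^m. Sf (b^m) k (int (b^v))) \<le> 2 * (1 + ln (real (b^m))) * real (b^v)"
proof -
  define N where "N = b^m"
  define K where "K = 2 * (1 + ln (real N))"
  define f where "f h = 1 / \<bar>real_of_int h\<bar>" for h :: int
  have b2: "b \<ge> 2" using b prime_ge_2_nat by blast
  have N0: "N > 0" "N \<ge> 1" unfolding N_def using b2 by auto
  have f0: "f h \<ge> 0" for h unfolding f_def by simp
  have "(\<Sum>k<N. Sf N k (int (b^v))) = (\<Sum>h\<in>Hs N. (\<Sum>k<N. ee N h k (int (b^v))) / of_real \<bar>real_of_int h\<bar>)"
    unfolding Sf_def by (subst sum.swap) (simp add: sum_divide_distrib)
  also have "norm \<dots> \<le> (\<Sum>h\<in>Hs N. norm ((\<Sum>k<N. ee N h k (int (b^v))) / of_real \<bar>real_of_int h\<bar>))"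
    by (rule norm_sum)
  also have "\<dots> \<le> (\<Sum>h\<in>Hs N. if int N dvd h * int (b^v) then real N * f h else 0)"
  proof (rule sum_mono)
    fix h
    have ee_eq: "ee N h k (int (b^v)) = exp (2 * of_real pi * \<i> * of_int (h * int (b^v)) * of_nat k / of_nat N)" for k
      unfolding ee_def by (simp add: field_simps)
    show "norm ((\<Sum>k<N. ee N h k (int (b^v))) / of_real \<bar>real_of_int h\<bar>) \<le> (if int N dvd h * int (b^v) then real N * f h else 0)"
    proof (cases "int N dvd h * int (b^v)")
      case True
      have "norm (\<Sum>k<N. ee N h k (int (b^v))) \<le> (\<Sum>k<N. norm (ee N h k (int (b^v))))" by (rule norm_sum)
      also have "\<dots> = real N" by (simp add: norm_ee)
      finally show ?thesis using True unfolding f_def by (simp add: norm_divide divide_right_mono)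
    next
      case False
      have "(\<Sum>k<N. ee N h k (int (b^v))) = 0" unfolding ee_eq by (rule geo_sum) (use N0 False in auto)
      then show ?thesis using False by simp
    qed
  qed
  also have "\<dots> = real N * (\<Sum>h\<in>{h\<in>Hs N. int N dvd h * int (b^v)}. f h)"
    by (auto simp: sum.inter_filter sum_distrib_left intro!: sum.cong)
  also have "\<dots> \<le> K * real (b^v)"
  proof (cases "v < m")
    case True
    have "{h\<in>Hs N. int N dvd h * int (b^v)} \<subseteq> {h\<in>Hs N. int (b^(m-v)) dvd h}"
    proof safe
      fix h assume "h \<in> Hs N" "int N dvd h * int (b^v)"
      have "int N = int (b^v) * int (b^(m-v))" unfolding N_def using True by (simp flip: power_add)
      hence "int (b^v) * int (b^(m-v)) dvd int (b^v) * h" using \<open>int N dvd h * int (b^v)\<close> by (simp add: mult.commute)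
      thus "int (b^(m-v)) dvd h" using b2 by (subst (asm) dvd_mult_cancel_left) auto
    qed
    hence "(\<Sum>h\<in>{h\<in>Hs N. int N dvd h * int (b^v)}. f h) \<le> (\<Sum>h\<in>{h\<in>Hs N. int (b^(m-v)) dvd h}. f h)"
      using f0 by (intro sum_mono2) auto
    also have "\<dots> \<le> K / real (b^(m-v))"
      using sum_Hs_dvd[of "int (b^(m-v))" N] b2 N0 unfolding f_def K_def by simp
    finally have "real N * (\<Sum>h\<in>{h\<in>Hs N. int N dvd h * int (b^v)}. f h) \<le> real N * (K / real (b^(m-v)))"
      by (intro mult_left_mono) auto
    also have "real N * (K / real (b^(m-v))) = K * real (b^v)"
    proof -
      have "real N = real (b^v) * real (b^(m-v))" unfolding N_def using True by (simp flip: power_add)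
      thus ?thesis using b2 by simp
    qed
    finally show ?thesis .
  next
    case False
    have "(\<Sum>h\<in>{h\<in>Hs N. int N dvd h * int (b^v)}. f h) \<le> (\<Sum>h\<in>Hs N. f h)"
      using f0 by (intro sum_mono2) auto
    also have "\<dots> \<le> K" using sum_Hs[OF N0(2)] unfolding f_def K_def .
    finally have "real N * (\<Sum>h\<in>{h\<in>Hs N. int N dvd h * int (b^v)}. f h) \<le> real N * K"
      by (simp add: mult_left_mono)
    also have "\<dots> \<le> real (b^v) * K"
    proof (rule mult_right_mono)
      show "real N \<le> real (b^v)" unfolding N_def using False b2 by (simp add: power_increasing)
      show "0 \<le> K" unfolding K_def using N0 by simp
    qed
    finally show ?thesis by (simp add: mult.commute)
  qed
  finally show ?thesis unfolding N_def K_def .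
qed

lemma base_bound:
  assumes b: "prime b" and m: "m \<ge> 1" and g: "\<And>j. j \<ge> 1 \<Longrightarrow> 0 < \<gamma> j"
    and cbc: "reduced_CBC b m \<gamma> w s z"
  shows "R (b^m) \<gamma> 1 (genvec b w z) \<le> \<gamma> 1 * real b ^ w 1
       * (real m * (2 * (1 + ln (real (b^m)))) * real b / real (b^m))"
proof -
  define N where "N = b^m"
  define K where "K = 2 * (1 + ln (real N))"
  have b2: "b \<ge> 2" using b prime_ge_2_nat by blast
  have N0: "N > 0" "N \<ge> 1" unfolding N_def using b2 by auto
  have K0: "K \<ge> 0" unfolding K_def using N0 by simp
  have z1: "z 1 = 1" using cbc unfolding reduced_CBC_def by simp
  have y1: "genvec b w z (Suc 0) = int (b ^ w 1)" unfolding genvec_def using z1 by simp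
  have "Rc N \<gamma> 1 (genvec b w z) = of_real (\<gamma> 1) / of_nat N * (\<Sum>k<N. Sf N k (int (b ^ w 1)))"
    using Rc_Suc[OF N0(1), of \<gamma> 0 "genvec b w z"] Rc_0[OF N0(1)] y1 by (simp add: Pf_def)
  hence "R N \<gamma> 1 (genvec b w z) \<le> norm (of_real (\<gamma> 1) / of_nat N * (\<Sum>k<N. Sf N k (int (b ^ w 1))))"
    unfolding R_def by (simp only: complex_Re_le_cmod)
  also have "\<dots> = \<gamma> 1 / real N * norm (\<Sum>k<N. Sf N k (int (b ^ w 1)))"
    using g[of 1] by (simp add: norm_mult norm_divide)
  also have "\<dots> \<le> \<gamma> 1 / real N * (K * real (b ^ w 1))"
    using sum_Sf_bound[OF b m, of "w 1"] g[of 1] N0 unfolding N_def K_def by (intro mult_left_mono) auto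
  also have "\<dots> \<le> \<gamma> 1 / real N * (real m * K * real b * real (b ^ w 1))"
  proof (intro mult_left_mono)
    have "1 * 1 \<le> real m * real b" using m b2 by (intro mult_mono) auto
    hence "1 \<le> real m * real b" by simp
    hence "K * 1 \<le> K * (real m * real b)" using K0 by (intro mult_left_mono) auto
    thus "K * real (b ^ w 1) \<le> real m * K * real b * real (b ^ w 1)"
      by (intro mult_right_mono) (auto simp: algebra_simps)
    show "0 \<le> \<gamma> 1 / real N" using g[of 1] by simp
  qed
  finally show ?thesis unfolding N_def K_def by (simp add: field_simps)
qed



lemma R_bound:
  assumes b: "prime b" and m: "m \<ge> 1" and g: "\<And>j. j \<ge> 1 \<Longrightarrow> 0 < \<gamma> j"
    and cbc: "reduced_CBC b m \<gamma> w s z"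
  shows "1 \<le> d \<Longrightarrow> d \<le> s \<Longrightarrow> R (b^m) \<gamma> d (genvec b w z) \<le>
     (\<Prod>j\<in>{1..d}. 1 + \<gamma> j * (3 + 2 * ln (real (b^m))))
     * (real m * (2 * (1 + ln (real (b^m)))) * real b / real (b^m))
     * (\<Sum>j\<in>{1..d}. \<gamma> j * real b ^ w j)"
proof (induction d)
  case 0
  then show ?case by simp
next
  case (Suc d)
  define N where "N = b^m"
  define A where "A = 3 + 2 * ln (real N)"
  define T where "T = real m * (2 * (1 + ln (real N))) * real b / real N"
  define Q where "Q d = (\<Prod>j\<in>{1..d}. 1 + \<gamma> j * A)" for d
  define G where "G d = (\<Sum>j\<in>{1..d}. \<gamma> j * real b ^ w j)" for d
  have b2: "b \<ge> 2" using b prime_ge_2_nat by blast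
  have N0: "N > 0" "N \<ge> 1" unfolding N_def using b2 by auto
  have A1: "A \<ge> 1" unfolding A_def using N0 by simp
  have T0: "T \<ge> 0" unfolding T_def using N0 by simp
  have gj: "0 \<le> \<gamma> j" if "j \<ge> 1" for j using g[OF that] by simp
  have Q1: "Q d \<ge> 1" for d unfolding Q_def
    by (rule prod_ge_1) (use gj A1 in auto)
  have G0: "G d \<ge> 0" for d unfolding G_def by (intro sum_nonneg) (use gj in auto)
  have QS: "Q (Suc d) = Q d * (1 + \<gamma> (Suc d) * A)" unfolding Q_def by (simp add: prod.nat_ivl_Suc')
  have GS: "G (Suc d) = G d + \<gamma> (Suc d) * real b ^ w (Suc d)" unfolding G_def by (simp add: sum.nat_ivl_Suc')
  show ?case
  proof (cases "d = 0")
    case True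
    have "R N \<gamma> 1 (genvec b w z) \<le> \<gamma> 1 * real b ^ w 1 * T"
      using base_bound[OF b m g cbc] unfolding N_def T_def by simp
    also have "\<dots> \<le> Q 1 * T * G 1"
    proof -
      have "\<gamma> 1 * real b ^ w 1 * T = 1 * T * G 1" unfolding G_def by simp
      also have "\<dots> \<le> Q 1 * T * G 1" using Q1[of 1] T0 G0[of 1] by (intro mult_right_mono) auto
      finally show ?thesis .
    qed
    finally show ?thesis using True unfolding N_def A_def T_def Q_def G_def by simp
  next
    case False
    hence d: "1 \<le> d" "d < s" using Suc.prems by auto
    have IH: "R N \<gamma> d (genvec b w z) \<le> Q d * T * G d"
      using Suc.IH d unfolding N_def A_def T_def Q_def G_def by simp
    have st: "R N \<gamma> (Suc d) (genvec b w z) \<le> beta \<gamma> (Suc d) * R N \<gamma> d (genvec b w z)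
        + \<gamma> (Suc d) * real b ^ w (Suc d) * Q d * T"
      using step_bound[OF b m g cbc d] unfolding N_def A_def T_def Q_def by simp
    have be: "0 < beta \<gamma> (Suc d)" "beta \<gamma> (Suc d) \<le> 1 + \<gamma> (Suc d) * A"
      unfolding beta_def using gj[of "Suc d"] A1 by (auto simp: mult_le_cancel_left1)
    have "beta \<gamma> (Suc d) * R N \<gamma> d (genvec b w z) \<le> beta \<gamma> (Suc d) * (Q d * T * G d)"
      using IH be by (intro mult_left_mono) auto
    also have "\<dots> \<le> (1 + \<gamma> (Suc d) * A) * (Q d * T * G d)"
      using be Q1[of d] T0 G0[of d] by (intro mult_right_mono) auto
    finally have 1: "beta \<gamma> (Suc d) * R N \<gamma> d (genvec b w z) \<le> (1 + \<gamma> (Suc d) * A) * (Q d * T * G d)" .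
    have 2: "\<gamma> (Suc d) * real b ^ w (Suc d) * Q d * T \<le> (1 + \<gamma> (Suc d) * A) * (Q d * T * (\<gamma> (Suc d) * real b ^ w (Suc d)))"
    proof -
      have "\<gamma> (Suc d) * real b ^ w (Suc d) * Q d * T = 1 * (Q d * T * (\<gamma> (Suc d) * real b ^ w (Suc d)))" by simp
      also have "\<dots> \<le> (1 + \<gamma> (Suc d) * A) * (Q d * T * (\<gamma> (Suc d) * real b ^ w (Suc d)))"
        using gj[of "Suc d"] A1 Q1[of d] T0 by (intro mult_right_mono) auto
      finally show ?thesis .
    qed
    have "R N \<gamma> (Suc d) (genvec b w z) \<le> Q (Suc d) * T * G (Suc d)"
      using st 1 2 unfolding QS GS by (simp add: algebra_simps)
    then show ?thesis unfolding N_def A_def T_def Q_def G_def .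
  qed
qed



lemma tail_small:
  fixes \<gamma> :: "nat \<Rightarrow> real"
  assumes "summable (\<lambda>i. \<gamma> (i + 1))" "\<And>j. j \<ge> 1 \<Longrightarrow> 0 \<le> \<gamma> j" "r > 0"
  shows "\<exists>J. \<forall>s. (\<Sum>j\<in>{1..s} - {..J}. \<gamma> j) \<le> r"
proof -
  obtain J where J: "\<forall>n\<ge>J. norm (\<Sum>i. \<gamma> (i + n + 1)) < r"
    using suminf_exist_split[OF assms(3,1)] by (auto simp: add.assoc)
  have sJ: "summable (\<lambda>i. \<gamma> (i + J + 1))"
    using assms(1) summable_iff_shift[of "\<lambda>i. \<gamma> (i + 1)" J] by (simp add: add.commute add.left_commute)
  have "(\<Sum>j\<in>{1..s} - {..J}. \<gamma> j) \<le> r" for s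
  proof -
    have eq: "{1..s} - {..J} = (\<lambda>i. i + J + 1) ` {..<s - J}"
    proof (rule set_eqI, rule iffI)
      fix j assume "j \<in> {1..s} - {..J}"
      hence "j = (j - J - 1) + J + 1" "j - J - 1 < s - J" by auto
      thus "j \<in> (\<lambda>i. i + J + 1) ` {..<s - J}" by (intro image_eqI) auto
    qed auto
    have "(\<Sum>j\<in>{1..s} - {..J}. \<gamma> j) = (\<Sum>i<s - J. \<gamma> (i + J + 1))"
      unfolding eq by (subst sum.reindex) (auto simp: inj_on_def)
    also have "\<dots> \<le> (\<Sum>i. \<gamma> (i + J + 1))"
      by (rule sum_le_suminf[OF sJ]) (use assms(2) in auto)
    also have "\<dots> \<le> r" using J by auto
    finally show ?thesis .
  qed
  thus ?thesis by blast
qed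

lemma prod_bound:
  fixes \<gamma> :: "nat \<Rightarrow> real"
  assumes g: "\<And>j. j \<ge> 1 \<Longrightarrow> 0 \<le> \<gamma> j \<and> \<gamma> j \<le> 1" and A: "A \<ge> 0"
    and J: "(\<Sum>j\<in>{1..s} - {..J}. \<gamma> j) \<le> r"
  shows "(\<Prod>j\<in>{1..s}. 1 + \<gamma> j * A) \<le> (1 + A) ^ J * exp (A * r)"
proof -
  have "(\<Prod>j\<in>{1..s}. 1 + \<gamma> j * A) \<le> (\<Prod>j\<in>{1..s}. if j \<le> J then 1 + A else exp (\<gamma> j * A))"
  proof (rule prod_mono, safe)
    fix j assume j: "j \<in> {1..s}"
    have gj: "0 \<le> \<gamma> j" "\<gamma> j \<le> 1" using g j by auto
    show "0 \<le> 1 + \<gamma> j * A" using gj A by simp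
    show "1 + \<gamma> j * A \<le> (if j \<le> J then 1 + A else exp (\<gamma> j * A))"
      using gj A exp_ge_add_one_self[of "\<gamma> j * A"] by (auto simp: mult_left_le_one_le add.commute)
  qed
  also have "\<dots> = (\<Prod>j\<in>{1..s} \<inter> {j. j \<le> J}. 1 + A) * (\<Prod>j\<in>{1..s} \<inter> - {j. j \<le> J}. exp (\<gamma> j * A))"
    by (rule prod.If_cases) simp
  also have "\<dots> \<le> (1 + A) ^ J * exp (A * r)"
  proof (rule mult_mono)
    have "card ({1..s} \<inter> {j. j \<le> J}) \<le> card {1..J}" by (rule card_mono) auto
    hence "card ({1..s} \<inter> {j. j \<le> J}) \<le> J" by simp
    thus "(\<Prod>j\<in>{1..s} \<inter> {j. j \<le> J}. 1 + A) \<le> (1 + A) ^ J" using A by (simp add: power_increasing)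
    have "{1..s} \<inter> - {j. j \<le> J} = {1..s} - {..J}" by auto
    hence "(\<Prod>j\<in>{1..s} \<inter> - {j. j \<le> J}. exp (\<gamma> j * A)) = exp (A * (\<Sum>j\<in>{1..s} - {..J}. \<gamma> j))"
      by (simp add: exp_sum sum_distrib_left mult.commute)
    also have "exp (A * (\<Sum>j\<in>{1..s} - {..J}. \<gamma> j)) \<le> exp (A * r)"
      using J A by (simp add: mult_left_mono)
    finally show "(\<Prod>j\<in>{1..s} \<inter> - {j. j \<le> J}. exp (\<gamma> j * A)) \<le> exp (A * r)" .
    show "0 \<le> (1 + A) ^ J" using A by simp
    show "0 \<le> (\<Prod>j\<in>{1..s} \<inter> - {j. j \<le> J}. exp (\<gamma> j * A))" by (simp add: prod_nonneg)
  qed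
  finally show ?thesis .
qed

lemma lin_ln_bound:
  fixes x a c \<epsilon> :: real
  assumes "x \<ge> 1" "\<epsilon> > 0" "a \<ge> 0" "c \<ge> 0"
  shows "a + c * ln x \<le> (a + c / \<epsilon>) * x powr \<epsilon>"
proof -
  have p1: "x powr \<epsilon> \<ge> 1" using assms by (simp add: ge_one_powr_ge_zero)
  have "c * ln x \<le> c * (x powr \<epsilon> / \<epsilon>)" using ln_powr_bound[OF assms(1,2)] assms(4) by (rule mult_left_mono)
  moreover have "a \<le> a * x powr \<epsilon>" using p1 assms(3) by (simp add: mult_le_cancel_left1)
  ultimately show ?thesis by (simp add: algebra_simps)
qed



theorem mainTheorem5:
  fixes b :: nat and \<gamma> :: "nat \<Rightarrow> real" and w :: "nat \<Rightarrow> nat"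
  assumes "prime b"
    and "\<forall>j\<ge>1. \<gamma> (j + 1) \<le> \<gamma> j"
    and "\<forall>j\<ge>1. 0 < \<gamma> j \<and> \<gamma> j \<le> 1"
    and "\<forall>j\<ge>1. w j \<le> w (j + 1)"
    and "summable (\<lambda>j. \<gamma> (j + 1) * real b ^ w (j + 1))"
  shows "\<forall>\<delta>::real. 0 < \<delta> \<and> \<delta> < 1 \<longrightarrow>
           (\<exists>c>0. \<forall>s\<ge>1. \<forall>m\<ge>1. \<forall>z. reduced_CBC b m \<gamma> w s z \<longrightarrow>
              R (b ^ m) \<gamma> s (genvec b w z) \<le> c * real (b ^ m) powr (\<delta> - 1))"
proof (intro allI impI)
  fix \<delta> :: real assume \<delta>: "0 < \<delta> \<and> \<delta> < 1"
  have b2: "b \<ge> 2" using assms(1) prime_ge_2_nat by blast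
  have gpos: "\<And>j. j \<ge> 1 \<Longrightarrow> 0 < \<gamma> j" using assms(3) by auto
  have g01: "\<And>j. j \<ge> 1 \<Longrightarrow> 0 \<le> \<gamma> j \<and> \<gamma> j \<le> 1" using assms(3) by (auto intro: less_imp_le)
  define f where "f j = \<gamma> (j + 1) * real b ^ w (j + 1)" for j
  have sf: "summable f" using assms(5) unfolding f_def .
  define Gt where "Gt = suminf f"
  have f0: "0 \<le> f j" for j unfolding f_def using gpos[of "j+1"] by simp
  have Gt0: "Gt \<ge> 0" unfolding Gt_def using sf f0 by (rule suminf_nonneg)
  have sg: "summable (\<lambda>i. \<gamma> (i + 1))"
  proof (rule summable_comparison_test[OF _ sf])
    show "\<exists>N. \<forall>n\<ge>N. norm (\<gamma> (n + 1)) \<le> f n"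
    proof (intro exI allI impI)
      fix n
      have "1 \<le> real b ^ w (n + 1)" using b2 by simp
      thus "norm (\<gamma> (n + 1)) \<le> f n" unfolding f_def using gpos[of "n+1"]
        by (simp add: mult_le_cancel_left1)
    qed
  qed
  obtain J where J: "\<And>s. (\<Sum>j\<in>{1..s} - {..J}. \<gamma> j) \<le> \<delta> / 8"
    using tail_small[OF sg, of "\<delta>/8"] g01 \<delta> by auto
  define \<epsilon> where "\<epsilon> = \<delta> / (4 * (real J + 1))"
  have \<epsilon>0: "\<epsilon> > 0" unfolding \<epsilon>_def using \<delta> by simp
  have \<epsilon>J: "\<epsilon> * real J \<le> \<delta> / 4" unfolding \<epsilon>_def using \<delta> by (simp add: field_simps)
  define C1 where "C1 = (4 + 2 / \<epsilon>) ^ J * exp (3 * \<delta> / 8)"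
  define c where "c = C1 * (6 / \<delta>) * (2 * (1 + 4 / \<delta>)) * real b * (Gt + 1)"
  have "4 + 2 / \<epsilon> > 0" using \<epsilon>0 by (simp add: add_pos_pos)
  hence C10: "C1 > 0" unfolding C1_def by simp
  have c0: "c > 0" unfolding c_def using C10 \<delta> b2 Gt0
    by (intro mult_pos_pos) (auto simp: add_pos_pos)
  show "\<exists>c>0. \<forall>s\<ge>1. \<forall>m\<ge>1. \<forall>z. reduced_CBC b m \<gamma> w s z \<longrightarrow>
              R (b ^ m) \<gamma> s (genvec b w z) \<le> c * real (b ^ m) powr (\<delta> - 1)"
  proof (intro exI[of _ c] conjI allI impI c0)
    fix s m :: nat and z assume s: "1 \<le> s" and m: "1 \<le> m" and cbc: "reduced_CBC b m \<gamma> w s z"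
    define N where "N = real (b^m)"
    have N1: "N \<ge> 1" unfolding N_def using b2 by simp
    have lnN: "ln N \<ge> 0" using N1 by simp
    define u where "u = N powr (\<delta> / 4)"
    have u1: "u \<ge> 1" unfolding u_def using N1 \<delta> by (simp add: ge_one_powr_ge_zero)
    define A where "A = 3 + 2 * ln N"
    have A0: "A \<ge> 0" unfolding A_def using lnN by simp
    define Q where "Q = (\<Prod>j\<in>{1..s}. 1 + \<gamma> j * A)"
    define K where "K = 2 * (1 + ln N)"
    define T where "T = real m * K * real b / N"
    define G where "G = (\<Sum>j\<in>{1..s}. \<gamma> j * real b ^ w j)"
    have Rb: "R (b ^ m) \<gamma> s (genvec b w z) \<le> Q * T * G"
      using R_bound[OF assms(1) m gpos cbc s order_refl]
      unfolding Q_def T_def G_def A_def K_def N_def by simp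
    have "Q \<le> (1 + A) ^ J * exp (A * (\<delta> / 8))"
      unfolding Q_def by (rule prod_bound[OF g01 A0 J])
    also have "(1 + A) ^ J \<le> (4 + 2 / \<epsilon>) ^ J * u"
    proof -
      have "1 + A \<le> (4 + 2 / \<epsilon>) * N powr \<epsilon>"
        using lin_ln_bound[OF N1 \<epsilon>0, of 4 2] unfolding A_def by simp
      hence "(1 + A) ^ J \<le> ((4 + 2 / \<epsilon>) * N powr \<epsilon>) ^ J"
        using A0 by (intro power_mono) auto
      also have "\<dots> = (4 + 2 / \<epsilon>) ^ J * N powr (real J * \<epsilon>)"
        using N1 by (simp add: power_mult_distrib powr_power)
      also have "N powr (real J * \<epsilon>) \<le> u"
        unfolding u_def using \<epsilon>J N1 by (intro powr_mono) (auto simp: mult.commute)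
      hence "(4 + 2 / \<epsilon>) ^ J * N powr (real J * \<epsilon>) \<le> (4 + 2 / \<epsilon>) ^ J * u"
        using \<epsilon>0 by (intro mult_left_mono) auto
      finally show ?thesis .
    qed
    hence "(1 + A) ^ J * exp (A * (\<delta> / 8)) \<le> (4 + 2 / \<epsilon>) ^ J * u * exp (A * (\<delta> / 8))"
      by (intro mult_right_mono) auto
    also have "exp (A * (\<delta> / 8)) = exp (3 * \<delta> / 8) * u"
    proof -
      have "A * (\<delta> / 8) = 3 * \<delta> / 8 + (\<delta> / 4) * ln N" unfolding A_def by (simp add: field_simps)
      hence "exp (A * (\<delta> / 8)) = exp (3 * \<delta> / 8) * exp ((\<delta> / 4) * ln N)" by (simp only: exp_add)
      also have "exp ((\<delta> / 4) * ln N) = u" unfolding u_def powr_def using N1 by simp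
      finally show ?thesis .
    qed
    finally have Qb: "Q \<le> C1 * u * u" unfolding C1_def by (simp add: algebra_simps)
    have mb: "real m \<le> (6 / \<delta>) * u"
    proof -
      have "ln N = real m * ln (real b)" unfolding N_def by (simp add: ln_realpow)
      moreover have "ln (real b) \<ge> 2/3"
      proof -
        have "real b \<ge> 2" using b2 by simp
        hence "ln 2 \<le> ln (real b)" by simp
        thus ?thesis using ln2_ge_two_thirds by linarith
      qed
      ultimately have "real m * (2/3) \<le> ln N" by (metis mult_left_mono of_nat_0_le_iff)
      moreover have "ln N \<le> u / (\<delta> / 4)" unfolding u_def using ln_powr_bound[OF N1, of "\<delta>/4"] \<delta> by simp
      ultimately have "real m * (2/3) \<le> u * (4 / \<delta>)" by simp
      thus ?thesis using \<delta> by (simp add: field_simps)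
    qed
    have Kb: "K \<le> 2 * (1 + 4 / \<delta>) * u"
      using lin_ln_bound[OF N1, of "\<delta>/4" 1 1] \<delta> unfolding K_def u_def by (simp add: algebra_simps)
    have K0: "K \<ge> 0" unfolding K_def using lnN by simp
    have Tb: "T \<le> (6 / \<delta>) * u * (2 * (1 + 4 / \<delta>) * u) * real b / N"
    proof -
      have "real m * K \<le> (6 / \<delta>) * u * (2 * (1 + 4 / \<delta>) * u)"
        by (rule mult_mono[OF mb Kb]) (use \<delta> u1 K0 in auto)
      thus ?thesis unfolding T_def using N1 by (intro divide_right_mono mult_right_mono) auto
    qed
    have G0: "G \<ge> 0" unfolding G_def using g01 by (intro sum_nonneg) auto
    have Gb: "G \<le> Gt + 1"
    proof -
      have "G = (\<Sum>i<s. f i)"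
        unfolding G_def f_def
        by (rule sum.reindex_bij_witness[of _ "\<lambda>i. i + 1" "\<lambda>j. j - 1"]) auto
      also have "\<dots> \<le> Gt" unfolding Gt_def by (rule sum_le_suminf[OF sf]) (use f0 in auto)
      finally show ?thesis by simp
    qed
    have T0: "T \<ge> 0" unfolding T_def using K0 N1 by simp
    have Q0: "Q \<ge> 0" unfolding Q_def using g01 A0 by (intro prod_nonneg) auto
    have "Q * T * G \<le> (C1 * u * u) * ((6 / \<delta>) * u * (2 * (1 + 4 / \<delta>) * u) * real b / N) * (Gt + 1)"
      by (intro mult_mono Qb Tb Gb) (use Q0 T0 G0 C10 u1 \<delta> N1 in auto)
    also have "\<dots> = c * (u ^ 4 / N)" unfolding c_def by (simp add: field_simps power4_eq_xxxx)
    also have "u ^ 4 / N = N powr (\<delta> - 1)"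
    proof -
      have "u ^ 4 = N powr \<delta>" unfolding u_def using N1 by (simp add: powr_power)
      thus ?thesis using N1 by (simp add: powr_diff)
    qed
    finally show "R (b ^ m) \<gamma> s (genvec b w z) \<le> c * real (b ^ m) powr (\<delta> - 1)"
      using Rb unfolding N_def by linarith
  qed
qed

end
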